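(* Fix real numbers $r_1,\dots,r_m\in[0,1]$. Then the set $W(r_1,\dots,r_m)=\{\mathbf{x}\in\mathcal{C}_n:\mathbf{x}_T^{(j)}=r_j\text{ for all }j\in[m]\}$ contains at most $2^{n(m+1)}$ Generalized Nash equilibria of $G^{(2)}$.
   Context: $G^{(2)}$ is a Fragile multi-CPR Game with $n\ge1$ players and $m\ge1$ CPRs: $[k]=\{1,\dots,k\}$, $C_m=\{(x_1,\dots,x_m)\in[0,1]^m:\sum_j x_j\le1\}$, $\mathcal{C}_n=\prod_{i\in[n]}C_m$, $\mathcal{C}_{-i}=\prod_{[n]\setminus\{i\}}C_m$. A profile is $\mathbf{x}=(\mathbf{x}_1,\dots,\mathbf{x}_n)$, $\mathbf{x}_i=(x_{i1},\dots,x_{im})$; write $\mathbf{x}=(\mathbf{x}_i,\mathbf{x}_{-i})$; $\mathbf{x}_T^{(j)}=\sum_i x_{ij}$, $\mathbf{x}_T^{j|i}=\sum_{\ell\ne i}x_{\ell j}$. Each CPR $j$ has return rate $\mathcal{R}_j(t)>1$ and failure probability $p_j(t)\in[0,1]$; each player $i$ has parameters $a_i,k_i$. $\mathcal{F}_{ij}(t)=(\mathcal{R}_j(t)-1)^{a_i}(1-p_j(t))-k_ip_j(t)$; utility $\mathcal{V}_i(\mathbf{x}_i;\mathbf{x}_{-i})=\sum_j x_{ij}^{a_i}\mathcal{F}_{ij}(\mathbf{x}_T^{(j)})$. Assumption: (1) $p_j(0)=0$, $p_j(t)=1$ for $t\ge1$; (2) $a_i\in(0,1]$, $k_i>0$;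 (3) each $\mathcal{F}_{ij}$ (continuous on $[0,1]$) has strictly negative first and second derivatives on $(0,1)$. $\omega_{ij}\in(0,1)$ is the unique zero of $\mathcal{F}_{ij}$ in $(0,1)$. $A(\mathbf{x}_{-i})=\{j:\mathbf{x}_T^{j|i}<\omega_{ij}\}$. $\vartheta_i(\mathbf{x}_{-i})=C_m\cap\big(\prod_{j\in A(\mathbf{x}_{-i})}[0,\omega_{ij}-\mathbf{x}_T^{j|i}]\times\prod_{j\notin A(\mathbf{x}_{-i})}\{0\}\big)$. A Generalized Nash equilibrium is $\mathbf{x}\in\mathcal{C}_n$ with, for all $i$, $\mathbf{x}_i\in\vartheta_i(\mathbf{x}_{-i})$ and $\mathcal{V}_i(\mathbf{x}_i;\mathbf{x}_{-i})\ge\mathcal{V}_i(\mathbf{z};\mathbf{x}_{-i})$ for all $\mathbf{z}\in\vartheta_i(\mathbf{x}_{-i})$. *)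

theory Defs
  imports "HOL-Analysis.Analysis"
begin

text \<open>Players are indexed by {1..n}, CPRs by {1..m}. A strategy of a player is a
function nat => real vanishing outside {1..m}; a profile is a function
nat => nat => real vanishing outside {1..n} x {1..m}.\<close>

definition simplexC :: "nat \<Rightarrow> (nat \<Rightarrow> real) set" where
  "simplexC m = {y. (\<forall>j. j \<notin> {1..m} \<longrightarrow> y j = 0)
                   \<and> (\<forall>j\<in>{1..m}. 0 \<le> y j \<and> y j \<le> 1)
                   \<and> (\<Sum>j=1..m. y j) \<le> 1}"

definition profiles :: "nat \<Rightarrow> nat \<Rightarrow> (nat \<Rightarrow> nat \<Rightarrow> real) set" where
  "profiles n m = {x. (\<forall>i. i \<notin> {1..n} \<longrightarrow> x i = (\<lambda>_. 0))
                     \<and> (\<forall>i\<in>{1..n}. x i \<in> simplexC m)}"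

definition totalInv :: "nat \<Rightarrow> (nat \<Rightarrow> nat \<Rightarrow> real) \<Rightarrow> nat \<Rightarrow> real" where
  "totalInv n x j = (\<Sum>i=1..n. x i j)"

definition othersInv :: "nat \<Rightarrow> (nat \<Rightarrow> nat \<Rightarrow> real) \<Rightarrow> nat \<Rightarrow> nat \<Rightarrow> real" where
  "othersInv n x i j = (\<Sum>l\<in>{1..n} - {i}. x l j)"

definition Ffun :: "(nat \<Rightarrow> real) \<Rightarrow> (nat \<Rightarrow> real) \<Rightarrow> (nat \<Rightarrow> real \<Rightarrow> real)
                    \<Rightarrow> (nat \<Rightarrow> real \<Rightarrow> real) \<Rightarrow> nat \<Rightarrow> nat \<Rightarrow> real \<Rightarrow> real" where
  "Ffun a k R p i j t = (R j t - 1) powr (a i) * (1 - p j t) - k i * p j t"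

definition Vutil :: "nat \<Rightarrow> nat \<Rightarrow> (nat \<Rightarrow> real) \<Rightarrow> (nat \<Rightarrow> real) \<Rightarrow> (nat \<Rightarrow> real \<Rightarrow> real)
                    \<Rightarrow> (nat \<Rightarrow> real \<Rightarrow> real) \<Rightarrow> nat \<Rightarrow> (nat \<Rightarrow> nat \<Rightarrow> real) \<Rightarrow> real" where
  "Vutil n m a k R p i x = (\<Sum>j=1..m. x i j powr (a i) * Ffun a k R p i j (totalInv n x j))"

definition omega :: "(nat \<Rightarrow> real) \<Rightarrow> (nat \<Rightarrow> real) \<Rightarrow> (nat \<Rightarrow> real \<Rightarrow> real)
                    \<Rightarrow> (nat \<Rightarrow> real \<Rightarrow> real) \<Rightarrow> nat \<Rightarrow> nat \<Rightarrow> real" where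
  "omega a k R p i j = (THE t. t \<in> {0<..<1} \<and> Ffun a k R p i j t = 0)"

definition theta :: "nat \<Rightarrow> nat \<Rightarrow> (nat \<Rightarrow> real) \<Rightarrow> (nat \<Rightarrow> real) \<Rightarrow> (nat \<Rightarrow> real \<Rightarrow> real)
                    \<Rightarrow> (nat \<Rightarrow> real \<Rightarrow> real) \<Rightarrow> nat \<Rightarrow> (nat \<Rightarrow> nat \<Rightarrow> real) \<Rightarrow> (nat \<Rightarrow> real) set" where
  "theta n m a k R p i x = {z \<in> simplexC m. \<forall>j\<in>{1..m}.
      (if othersInv n x i j < omega a k R p i j
       then 0 \<le> z j \<and> z j \<le> omega a k R p i j - othersInv n x i j
       else z j = 0)}"

definition isGNE :: "nat \<Rightarrow> nat \<Rightarrow> (nat \<Rightarrow> real) \<Rightarrow> (nat \<Rightarrow> real) \<Rightarrow> (nat \<Rightarrow> real \<Rightarrow> real)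
                    \<Rightarrow> (nat \<Rightarrow> real \<Rightarrow> real) \<Rightarrow> (nat \<Rightarrow> nat \<Rightarrow> real) \<Rightarrow> bool" where
  "isGNE n m a k R p x \<longleftrightarrow> x \<in> profiles n m \<and>
     (\<forall>i\<in>{1..n}. x i \<in> theta n m a k R p i x \<and>
        (\<forall>z\<in>theta n m a k R p i x. Vutil n m a k R p i (x(i := z)) \<le> Vutil n m a k R p i x))"

definition Wset :: "nat \<Rightarrow> nat \<Rightarrow> (nat \<Rightarrow> real) \<Rightarrow> (nat \<Rightarrow> nat \<Rightarrow> real) set" where
  "Wset n m r = {x \<in> profiles n m. \<forall>j\<in>{1..m}. totalInv n x j = r j}"

end

theory Submission
  imports Defs
begin


lemma foc_transfer:
  fixes f g :: "real \<Rightarrow> real"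
  assumes df: "(f has_real_derivative Df) (at u)" and dg: "(g has_real_derivative Dg) (at v)"
    and d: "d > 0" and le: "\<And>e. 0 < e \<Longrightarrow> e < d \<Longrightarrow> f (u + e) + g (v - e) \<le> f u + g v"
  shows "Df \<le> Dg"
proof (rule ccontr)
  assume "\<not> Df \<le> Dg"
  define H where "H = (\<lambda>e. f (u + e) + g (v - e))"
  have dH: "(H has_real_derivative (Df - Dg)) (at 0)"
  proof -
    have df0: "(f has_real_derivative Df) (at ((\<lambda>e. u + e) 0))" using df by simp
    have dg0: "(g has_real_derivative Dg) (at ((\<lambda>e. v - e) 0))" using dg by simp
    have i1: "((\<lambda>e. u + e) has_real_derivative 1) (at 0)" by (auto intro!: derivative_eq_intros)
    have i2: "((\<lambda>e. v - e) has_real_derivative -1) (at 0)" by (auto intro!: derivative_eq_intros)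
    have 1: "((\<lambda>e. f (u + e)) has_real_derivative Df) (at 0)"
      using DERIV_chain2[OF df0 i1] by simp
    have 2: "((\<lambda>e. g (v - e)) has_real_derivative (Dg * -1)) (at 0)"
      using DERIV_chain2[OF dg0 i2] by simp
    show ?thesis unfolding H_def using DERIV_add[OF 1 2] by simp
  qed
  from DERIV_pos_inc_right[OF dH] \<open>\<not> Df \<le> Dg\<close> obtain d' where
    "d' > 0" "\<And>h. h > 0 \<Longrightarrow> h < d' \<Longrightarrow> H 0 < H (0 + h)" by auto
  moreover have "min d d' / 2 > 0" "min d d' / 2 < d'" "min d d' / 2 < d" using d \<open>d' > 0\<close> by auto
  ultimately have "H 0 < H (min d d' / 2)" by fastforce
  moreover have "H (min d d' / 2) \<le> H 0" unfolding H_def using le[of "min d d' / 2"] \<open>min d d' / 2 > 0\<close> \<open>min d d' / 2 < d\<close> by simp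
  ultimately show False by simp
qed

lemma foc_inc:
  fixes f :: "real \<Rightarrow> real"
  assumes df: "(f has_real_derivative Df) (at u)" and d: "d > 0"
    and le: "\<And>e. 0 < e \<Longrightarrow> e < d \<Longrightarrow> f (u + e) \<le> f u"
  shows "Df \<le> 0"
  using foc_transfer[OF df DERIV_const[of "0::real" "at v"] d] le by simp

lemma foc_dec:
  fixes f :: "real \<Rightarrow> real"
  assumes df: "(f has_real_derivative Df) (at u)" and d: "d > 0"
    and le: "\<And>e. 0 < e \<Longrightarrow> e < d \<Longrightarrow> f (u - e) \<le> f u"
  shows "0 \<le> Df"
  using foc_transfer[OF DERIV_const[of "0::real" "at v"] df d] le by simp

lemma phi_dec:
  fixes a c d s t :: real
  assumes "0 < a" "a \<le> 1" "c > 0" "d < 0" "0 < s" "s < t"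
  shows "a * t powr (a - 1) * c + t powr a * d < a * s powr (a - 1) * c + s powr a * d"
proof -
  have "t powr (a - 1) \<le> s powr (a - 1)" using powr_mono2'[of "a-1" s t] assms by auto
  hence 1: "a * t powr (a - 1) * c \<le> a * s powr (a - 1) * c" using assms by auto
  have "s powr a < t powr a" using powr_less_mono2[of a s t] assms by auto
  hence "t powr a * d < s powr a * d" using assms by (simp add: mult_strict_right_mono_neg)
  with 1 show ?thesis by linarith
qed

lemma G_deriv:
  fixes F :: "real \<Rightarrow> real"
  assumes "x > 0" "(F has_real_derivative D) (at (o' + x))"
  shows "((\<lambda>t. t powr a * F (o' + t)) has_real_derivative
           (a * x powr (a - 1) * F (o' + x) + x powr a * D)) (at x)"
proof -
  have 1: "((\<lambda>t. F (o' + t)) has_real_derivative D) (at x)"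
  proof -
    have "((\<lambda>t. o' + t) has_real_derivative 1) (at x)" by (auto intro!: derivative_eq_intros)
    from DERIV_chain2[OF assms(2) this] show ?thesis by simp
  qed
  have 2: "((\<lambda>t. t powr a) has_real_derivative a * x powr (a - 1)) (at x)"
    using assms(1) by (auto intro!: derivative_eq_intros)
  show ?thesis using DERIV_mult[OF 2 1] by (simp add: algebra_simps)
qed

lemma sum_upd:
  fixes H :: "'a \<Rightarrow> 'b \<Rightarrow> real"
  assumes "finite A" "j \<in> A"
  shows "(\<Sum>l\<in>A. H l ((w(j := u)) l)) = (\<Sum>l\<in>A. H l (w l)) - H j (w j) + H j u"
proof -
  have "(\<Sum>l\<in>A. H l ((w(j := u)) l)) = H j u + (\<Sum>l\<in>A - {j}. H l ((w(j := u)) l))"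
    using sum.remove[OF assms, of "\<lambda>l. H l ((w(j:=u)) l)"] by simp
  also have "(\<Sum>l\<in>A - {j}. H l ((w(j := u)) l)) = (\<Sum>l\<in>A - {j}. H l (w l))"
    by (rule sum.cong) auto
  also have "(\<Sum>l\<in>A. H l (w l)) = H j (w j) + (\<Sum>l\<in>A - {j}. H l (w l))"
    using sum.remove[OF assms, of "\<lambda>l. H l (w l)"] by simp
  ultimately show ?thesis by linarith
qed



locale cpr =
  fixes n m :: nat and R p :: "nat \<Rightarrow> real \<Rightarrow> real" and a k r :: "nat \<Rightarrow> real"
    and DF :: "nat \<Rightarrow> nat \<Rightarrow> real \<Rightarrow> real"
  assumes R_gt: "\<forall>j\<in>{1..m}. \<forall>t\<ge>0. R j t > 1"
    and p0: "\<forall>j\<in>{1..m}. p j 0 = 0"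
    and p1: "\<forall>j\<in>{1..m}. \<forall>t\<ge>1. p j t = 1"
    and a_range: "\<forall>i\<in>{1..n}. 0 < a i \<and> a i \<le> 1"
    and k_pos: "\<forall>i\<in>{1..n}. k i > 0"
    and F_cont: "\<forall>i\<in>{1..n}. \<forall>j\<in>{1..m}. continuous_on {0..1} (Ffun a k R p i j)"
    and DF: "\<forall>i\<in>{1..n}. \<forall>j\<in>{1..m}. \<forall>t\<in>{0<..<1}.
        (Ffun a k R p i j has_real_derivative DF i j t) (at t) \<and> DF i j t < 0"
begin

abbreviation "F \<equiv> Ffun a k R p"
abbreviation "w \<equiv> omega a k R p"

lemma F_dec:
  assumes "i\<in>{1..n}" "j\<in>{1..m}" "0 \<le> t1" "t1 < t2" "t2 \<le> 1"
  shows "F i j t2 < F i j t1"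
proof (rule DERIV_neg_imp_decreasing_open[OF assms(4)])
  fix t assume "t1 < t" "t < t2"
  then show "\<exists>y. (F i j has_real_derivative y) (at t) \<and> y < 0"
    using DF assms by (intro exI[of _ "DF i j t"]) auto
next
  show "continuous_on {t1..t2} (F i j)"
    using continuous_on_subset[of "{0..1}" "F i j" "{t1..t2}"] F_cont assms by auto
qed

lemma F0: "i\<in>{1..n} \<Longrightarrow> j\<in>{1..m} \<Longrightarrow> F i j 0 > 0"
proof -
  assume "i\<in>{1..n}" "j\<in>{1..m}"
  then have "R j 0 > 1" "p j 0 = 0" using R_gt p0 by auto
  then show ?thesis unfolding Ffun_def by simp
qed

lemma F1: "i\<in>{1..n} \<Longrightarrow> j\<in>{1..m} \<Longrightarrow> F i j 1 < 0"
  unfolding Ffun_def using p1 k_pos by auto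

lemma omega:
  assumes i: "i\<in>{1..n}" and j: "j\<in>{1..m}"
  shows "0 < w i j \<and> w i j < 1 \<and> F i j (w i j) = 0"
proof -
  obtain t where t: "0 \<le> t" "t \<le> 1" "F i j t = 0"
    using IVT2'[of "F i j" 1 0 0] F0[OF i j] F1[OF i j] F_cont i j by fastforce
  have t01: "t \<in> {0<..<1}" using t F0[OF i j] F1[OF i j] by (cases "t = 0"; cases "t = 1") auto
  have ex: "\<exists>!t. t \<in> {0<..<1} \<and> F i j t = 0"
  proof (rule ex1I[of _ t])
    show "t \<in> {0<..<1} \<and> F i j t = 0" using t01 t by auto
  next
    fix s assume s: "s \<in> {0<..<1} \<and> F i j s = 0"
    show "s = t"
    proof (rule ccontr)
      assume "s \<noteq> t"
      then consider "s < t" | "t < s" by linarith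
      then show False
        using F_dec[OF i j, of s t] F_dec[OF i j, of t s] s t t01 by (cases; auto)
    qed
  qed
  show ?thesis unfolding omega_def using theI'[OF ex] by auto
qed

lemma F_pos:
  assumes "i\<in>{1..n}" "j\<in>{1..m}" "0 \<le> t" "t < w i j"
  shows "F i j t > 0"
  using F_dec[OF assms(1,2,3,4)] omega[OF assms(1,2)] by auto

lemma tot_split:
  assumes "i \<in> {1..n}"
  shows "totalInv n x j = othersInv n x i j + x i j"
  unfolding totalInv_def othersInv_def
  using sum.remove[of "{1..n}" i "\<lambda>l. x l j"] assms by simp

lemma others_upd: "othersInv n (x(i:=z)) i j = othersInv n x i j"
  unfolding othersInv_def by (rule sum.cong) auto

lemma V_upd:
  assumes "i \<in> {1..n}"
  shows "Vutil n m a k R p i (x(i:=z)) = (\<Sum>j=1..m. z j powr a i * F i j (othersInv n x i j + z j))"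
  unfolding Vutil_def using tot_split[OF assms, of "x(i:=z)"] others_upd by simp

lemma V_self:
  assumes "i \<in> {1..n}"
  shows "Vutil n m a k R p i x = (\<Sum>j=1..m. x i j powr a i * F i j (othersInv n x i j + x i j))"
  using V_upd[OF assms, of x "x i"] by simp

lemma o_nn:
  assumes "x \<in> profiles n m" "j \<in> {1..m}"
  shows "0 \<le> othersInv n x i j"
  unfolding othersInv_def
  using assms by (intro sum_nonneg) (auto simp: profiles_def simplexC_def)

definition phi :: "nat \<Rightarrow> nat \<Rightarrow> real \<Rightarrow> real" where
  "phi i j t = a i * t powr (a i - 1) * F i j (r j) + t powr a i * DF i j (r j)"

lemma sum_upd1:
  fixes v :: "nat \<Rightarrow> real"
  assumes "j \<in> {1..m}"
  shows "(\<Sum>l=1..m. (v(j := u)) l) = (\<Sum>l=1..m. v l) - v j + u"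
  using sum_upd[of "{1..m}" j "\<lambda>l t. t" v u] assms by simp

end



context cpr begin

context
  fixes x :: "nat \<Rightarrow> nat \<Rightarrow> real" and i :: nat
  assumes gne: "isGNE n m a k R p x" and xW: "x \<in> Wset n m r" and i: "i \<in> {1..n}"
begin

lemma xprof: "x \<in> profiles n m" using gne unfolding isGNE_def by auto

lemma xi_simp: "x i \<in> simplexC m" using xprof i unfolding profiles_def by auto

lemma xnn: "j \<in> {1..m} \<Longrightarrow> 0 \<le> x i j" using xi_simp unfolding simplexC_def by auto
lemma xle1: "j \<in> {1..m} \<Longrightarrow> x i j \<le> 1" using xi_simp unfolding simplexC_def by auto
lemma xsum: "(\<Sum>j=1..m. x i j) \<le> 1" using xi_simp unfolding simplexC_def by auto
lemma xout: "j \<notin> {1..m} \<Longrightarrow> x i j = 0" using xi_simp unfolding simplexC_def by auto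

lemma xth: "j \<in> {1..m} \<Longrightarrow> (if othersInv n x i j < w i j
       then 0 \<le> x i j \<and> x i j \<le> w i j - othersInv n x i j else x i j = 0)"
  using gne i unfolding isGNE_def theta_def by auto

lemma opt: "z \<in> theta n m a k R p i x \<Longrightarrow> Vutil n m a k R p i (x(i := z)) \<le> Vutil n m a k R p i x"
  using gne i unfolding isGNE_def by auto

lemma rj: "j \<in> {1..m} \<Longrightarrow> othersInv n x i j + x i j = r j"
  using xW tot_split[OF i, of x j] unfolding Wset_def by auto

definition G :: "nat \<Rightarrow> real \<Rightarrow> real" where
  "G j t = t powr a i * F i j (othersInv n x i j + t)"

lemma opt1:
  assumes "j \<in> {1..m}" "(x i)(j := u) \<in> theta n m a k R p i x"
  shows "G j u \<le> G j (x i j)"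
proof -
  have "Vutil n m a k R p i (x(i := (x i)(j := u))) \<le> Vutil n m a k R p i x" by (rule opt[OF assms(2)])
  also have "Vutil n m a k R p i x = (\<Sum>l=1..m. G l (x i l))" unfolding G_def by (rule V_self[OF i])
  also have "Vutil n m a k R p i (x(i := (x i)(j := u))) = (\<Sum>l=1..m. G l (((x i)(j := u)) l))"
    unfolding G_def by (rule V_upd[OF i])
  also have "\<dots> = (\<Sum>l=1..m. G l (x i l)) - G j (x i j) + G j u"
    using sum_upd[of "{1..m}" j G "x i" u] assms by simp
  finally show ?thesis by simp
qed

lemma opt2:
  assumes "j \<in> {1..m}" "l \<in> {1..m}" "j \<noteq> l" "(x i)(j := u, l := v) \<in> theta n m a k R p i x"
  shows "G j u + G l v \<le> G j (x i j) + G l (x i l)"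
proof -
  have "Vutil n m a k R p i (x(i := (x i)(j := u, l := v))) \<le> Vutil n m a k R p i x" by (rule opt[OF assms(4)])
  also have "Vutil n m a k R p i x = (\<Sum>q=1..m. G q (x i q))" unfolding G_def by (rule V_self[OF i])
  also have "Vutil n m a k R p i (x(i := (x i)(j := u, l := v))) = (\<Sum>q=1..m. G q (((x i)(j := u, l := v)) q))"
    unfolding G_def by (rule V_upd[OF i])
  also have "\<dots> = (\<Sum>q=1..m. G q (((x i)(j := u)) q)) - G l (((x i)(j := u)) l) + G l v"
    using sum_upd[of "{1..m}" l G "(x i)(j := u)" v] assms by simp
  also have "(\<Sum>q=1..m. G q (((x i)(j := u)) q)) = (\<Sum>q=1..m. G q (x i q)) - G j (x i j) + G j u"
    using sum_upd[of "{1..m}" j G "x i" u] assms by simp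
  finally show ?thesis using assms(3) by simp
qed

lemma theta_memI:
  assumes out: "\<And>q. q \<notin> {1..m} \<Longrightarrow> z q = 0"
    and bnd: "\<And>q. q \<in> {1..m} \<Longrightarrow> 0 \<le> z q \<and> z q \<le> 1"
    and s: "(\<Sum>q=1..m. z q) \<le> 1"
    and th: "\<And>q. q \<in> {1..m} \<Longrightarrow> (if othersInv n x i q < w i q
       then 0 \<le> z q \<and> z q \<le> w i q - othersInv n x i q else z q = 0)"
  shows "z \<in> theta n m a k R p i x"
  unfolding theta_def simplexC_def using assms by blast

lemma upper1:
  assumes j: "j \<in> {1..m}" and u: "u \<le> w i j - othersInv n x i j"
  shows "u \<le> 1"
proof -
  have "w i j < 1" using omega[OF i j] by auto
  moreover have "0 \<le> othersInv n x i j" using o_nn[OF xprof j] .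
  ultimately show ?thesis using u by linarith
qed

lemma theta_upd1:
  assumes j: "j \<in> {1..m}" and o: "othersInv n x i j < w i j" and u: "0 \<le> u" "u \<le> w i j - othersInv n x i j"
    and s: "(\<Sum>l=1..m. x i l) - x i j + u \<le> 1"
  shows "(x i)(j := u) \<in> theta n m a k R p i x"
proof (rule theta_memI)
  fix q assume "q \<notin> {1..m}"
  then show "((x i)(j := u)) q = 0" using j xout by auto
next
  fix q assume q: "q \<in> {1..m}"
  show "0 \<le> ((x i)(j := u)) q \<and> ((x i)(j := u)) q \<le> 1"
  proof (cases "q = j")
    case True then show ?thesis using u upper1[OF j u(2)] by simp
  next
    case False then show ?thesis using xnn[OF q] xle1[OF q] by simp
  qed
  show "if othersInv n x i q < w i q
       then 0 \<le> ((x i)(j := u)) q \<and> ((x i)(j := u)) q \<le> w i q - othersInv n x i q else ((x i)(j := u)) q = 0"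
  proof (cases "q = j")
    case True then show ?thesis using u o by simp
  next
    case False then show ?thesis using xth[OF q] by simp
  qed
next
  show "(\<Sum>q=1..m. ((x i)(j := u)) q) \<le> 1" using sum_upd1[OF j, of "x i" u] s by simp
qed

lemma theta_upd2:
  assumes j: "j \<in> {1..m}" and l: "l \<in> {1..m}" and jl: "j \<noteq> l"
    and o: "othersInv n x i j < w i j" and u: "0 \<le> u" "u \<le> w i j - othersInv n x i j"
    and ol: "othersInv n x i l < w i l" and v: "0 \<le> v" "v \<le> w i l - othersInv n x i l"
    and s: "(\<Sum>q=1..m. x i q) - x i j + u - x i l + v \<le> 1"
  shows "(x i)(j := u, l := v) \<in> theta n m a k R p i x"
proof (rule theta_memI)
  fix q assume "q \<notin> {1..m}"
  then show "((x i)(j := u, l := v)) q = 0" using j l xout by auto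
next
  fix q assume q: "q \<in> {1..m}"
  show "0 \<le> ((x i)(j := u, l := v)) q \<and> ((x i)(j := u, l := v)) q \<le> 1"
  proof (cases "q = l")
    case True then show ?thesis using v upper1[OF l v(2)] by simp
  next
    case ql: False
    show ?thesis
    proof (cases "q = j")
      case True then show ?thesis using ql u upper1[OF j u(2)] by simp
    next
      case False then show ?thesis using ql xnn[OF q] xle1[OF q] by simp
    qed
  qed
  show "if othersInv n x i q < w i q
       then 0 \<le> ((x i)(j := u, l := v)) q \<and> ((x i)(j := u, l := v)) q \<le> w i q - othersInv n x i q
       else ((x i)(j := u, l := v)) q = 0"
  proof (cases "q = l")
    case True then show ?thesis using v ol by simp
  next
    case ql: False
    show ?thesis
    proof (cases "q = j")
      case True then show ?thesis using ql u o by simp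
    next
      case False then show ?thesis using ql xth[OF q] by simp
    qed
  qed
next
  have "(\<Sum>q=1..m. ((x i)(j := u, l := v)) q) = (\<Sum>q=1..m. ((x i)(j := u)) q) - ((x i)(j := u)) l + v"
    by (rule sum_upd1[OF l])
  also have "\<dots> = (\<Sum>q=1..m. x i q) - x i j + u - x i l + v"
    using sum_upd1[OF j, of "x i" u] jl by simp
  finally show "(\<Sum>q=1..m. ((x i)(j := u, l := v)) q) \<le> 1" using s by simp
qed

lemma pos_lt:
  assumes j: "j \<in> {1..m}" and pos: "x i j > 0"
  shows "r j < w i j"
proof -
  have o: "othersInv n x i j < w i j" and le: "x i j \<le> w i j - othersInv n x i j"
    using xth[OF j] pos by (auto split: if_splits)
  have onn: "0 \<le> othersInv n x i j" using o_nn[OF xprof j] .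
  show ?thesis
  proof (rule ccontr)
    assume "\<not> r j < w i j"
    then have eq: "othersInv n x i j + x i j = w i j" using rj[OF j] le by linarith
    have "(x i)(j := x i j / 2) \<in> theta n m a k R p i x"
      using theta_upd1[OF j o, of "x i j / 2"] pos le xsum by auto
    from opt1[OF j this] have "G j (x i j / 2) \<le> G j (x i j)" .
    moreover have "G j (x i j) = 0" unfolding G_def using eq omega[OF i j] by simp
    moreover have "F i j (othersInv n x i j + x i j / 2) > 0"
      using F_pos[OF i j] onn eq pos by auto
    then have "G j (x i j / 2) > 0" unfolding G_def using pos by simp
    ultimately show False by simp
  qed
qed

lemma pos_facts:
  assumes j: "j \<in> {1..m}" and pos: "x i j > 0"
  shows "0 < r j" "r j < w i j" "F i j (r j) > 0" "DF i j (r j) < 0"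
    "(G j has_real_derivative phi i j (x i j)) (at (x i j))"
proof -
  have onn: "0 \<le> othersInv n x i j" using o_nn[OF xprof j] .
  show r0: "0 < r j" using rj[OF j] onn pos by linarith
  show rw: "r j < w i j" by (rule pos_lt[OF j pos])
  show "F i j (r j) > 0" using F_pos[OF i j] r0 rw by auto
  have r1: "r j < 1" using rw omega[OF i j] by linarith
  show "DF i j (r j) < 0" using DF i j r0 r1 by auto
  have "(F i j has_real_derivative DF i j (r j)) (at (othersInv n x i j + x i j))"
    using DF i j r0 r1 rj[OF j] by auto
  from G_deriv[OF pos this, of "a i"] show "(G j has_real_derivative phi i j (x i j)) (at (x i j))"
    unfolding G_def phi_def using rj[OF j] by simp
qed

lemma P2:
  assumes j: "j \<in> {1..m}" and l: "l \<in> {1..m}" and jl: "j \<noteq> l"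
    and pj: "x i j > 0" and pl: "x i l > 0"
  shows "phi i j (x i j) \<le> phi i l (x i l)"
proof (rule foc_transfer[OF pos_facts(5)[OF j pj] pos_facts(5)[OF l pl]])
  show "0 < min (x i l) (w i j - r j)" using pl pos_lt[OF j pj] by auto
next
  fix e assume e: "0 < e" "e < min (x i l) (w i j - r j)"
  have oj: "othersInv n x i j < w i j" using rj[OF j] pos_lt[OF j pj] pj by linarith
  have ol: "othersInv n x i l < w i l" using rj[OF l] pos_lt[OF l pl] pl by linarith
  have "(x i)(j := x i j + e, l := x i l - e) \<in> theta n m a k R p i x"
    using theta_upd2[OF j l jl oj, of "x i j + e" "x i l - e"] ol e pj pl rj[OF j] rj[OF l] xsum pos_lt[OF l pl]
    by auto
  from opt2[OF j l jl this] show "G j (x i j + e) + G l (x i l - e) \<le> G j (x i j) + G l (x i l)" .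
qed

lemma P3:
  assumes j: "j \<in> {1..m}" and pj: "x i j > 0" and s: "(\<Sum>q=1..m. x i q) < 1"
  shows "phi i j (x i j) \<le> 0"
proof (rule foc_inc[OF pos_facts(5)[OF j pj]])
  show "0 < min (1 - (\<Sum>q=1..m. x i q)) (w i j - r j)" using s pos_lt[OF j pj] by auto
next
  fix e assume e: "0 < e" "e < min (1 - (\<Sum>q=1..m. x i q)) (w i j - r j)"
  have oj: "othersInv n x i j < w i j" using rj[OF j] pos_lt[OF j pj] pj by linarith
  have "(x i)(j := x i j + e) \<in> theta n m a k R p i x"
    using theta_upd1[OF j oj, of "x i j + e"] e pj rj[OF j] by auto
  from opt1[OF j this] show "G j (x i j + e) \<le> G j (x i j)" .
qed

lemma P4:
  assumes j: "j \<in> {1..m}" and pj: "x i j > 0"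
  shows "0 \<le> phi i j (x i j)"
proof (rule foc_dec[OF pos_facts(5)[OF j pj]])
  show "0 < x i j" by (rule pj)
next
  fix e assume e: "0 < e" "e < x i j"
  have oj: "othersInv n x i j < w i j" using rj[OF j] pos_lt[OF j pj] pj by linarith
  have "(x i)(j := x i j - e) \<in> theta n m a k R p i x"
    using theta_upd1[OF j oj, of "x i j - e"] e pj rj[OF j] xsum pos_lt[OF j pj] by auto
  from opt1[OF j this] show "G j (x i j - e) \<le> G j (x i j)" .
qed

end

lemma phi_mono:
  assumes i: "i \<in> {1..n}" "j \<in> {1..m}" "F i j (r j) > 0" "DF i j (r j) < 0" "0 < s" "s < t"
  shows "phi i j t < phi i j s"
  unfolding phi_def using phi_dec[of "a i" "F i j (r j)" "DF i j (r j)" s t] a_range assms by auto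

end



context cpr begin

lemma uniq_lt:
  assumes g1: "isGNE n m a k R p x" "x \<in> Wset n m r" and g2: "isGNE n m a k R p y" "y \<in> Wset n m r"
    and i: "i \<in> {1..n}"
    and supp: "\<forall>j\<in>{1..m}. x i j > 0 \<longleftrightarrow> y i j > 0"
    and flag: "(\<Sum>q=1..m. x i q) = 1 \<longleftrightarrow> (\<Sum>q=1..m. y i q) = 1"
    and j: "j \<in> {1..m}" and lt: "x i j < y i j"
  shows False
proof -
  have yj: "y i j > 0" using xnn[OF g1 i j] lt by linarith
  then have xj: "x i j > 0" using supp j by auto
  have c: "F i j (r j) > 0" "DF i j (r j) < 0" using pos_facts[OF g1 i j xj] by auto
  have m1: "phi i j (y i j) < phi i j (x i j)" using phi_mono[OF i j c xj lt] .
  show False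
  proof (cases "(\<Sum>q=1..m. x i q) = 1")
    case False
    then have "(\<Sum>q=1..m. x i q) < 1" using xsum[OF g1 i] by linarith
    then have "phi i j (x i j) \<le> 0" using P3[OF g1 i j xj] by blast
    moreover have "0 \<le> phi i j (y i j)" using P4[OF g2 i j yj] .
    ultimately show False using m1 by linarith
  next
    case True
    then have sy: "(\<Sum>q=1..m. y i q) = 1" using flag by simp
    have "\<exists>l\<in>{1..m}. y i l < x i l"
    proof (rule ccontr)
      assume "\<not> ?thesis"
      then have "\<forall>l\<in>{1..m}. x i l \<le> y i l" by auto
      then have "(\<Sum>q=1..m. x i q) < (\<Sum>q=1..m. y i q)"
        using sum_strict_mono_ex1[of "{1..m}" "x i" "y i"] j lt by blast
      then show False using True sy by simp
    qed
    then obtain l where l: "l \<in> {1..m}" "y i l < x i l" by auto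
    have jl: "j \<noteq> l" using l lt by auto
    have xl: "x i l > 0" using xnn[OF g2 i l(1)] l(2) by linarith
    then have yl: "y i l > 0" using supp l by auto
    have cl: "F i l (r l) > 0" "DF i l (r l) < 0" using pos_facts[OF g1 i l(1) xl] by auto
    have m2: "phi i l (x i l) < phi i l (y i l)" using phi_mono[OF i l(1) cl yl l(2)] .
    have "phi i j (x i j) \<le> phi i l (x i l)" using P2[OF g1 i j l(1) jl xj xl] .
    moreover have "phi i l (y i l) \<le> phi i j (y i j)" using P2[OF g2 i l(1) j jl[symmetric] yl yj] .
    ultimately show False using m1 m2 by linarith
  qed
qed

definition code :: "(nat \<Rightarrow> nat \<Rightarrow> real) \<Rightarrow> (nat \<times> nat) set" where
  "code x = {(i, j). i \<in> {1..n} \<and> j \<in> {1..m} \<and> x i j > 0}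
            \<union> {(i, j). i \<in> {1..n} \<and> j = 0 \<and> (\<Sum>q=1..m. x i q) = 1}"

lemma code_mem1: "j \<in> {1..m} \<Longrightarrow> (i, j) \<in> code x \<longleftrightarrow> (i \<in> {1..n} \<and> x i j > 0)"
  unfolding code_def by auto

lemma code_mem0: "(i, 0) \<in> code x \<longleftrightarrow> (i \<in> {1..n} \<and> (\<Sum>q=1..m. x i q) = 1)"
  unfolding code_def by auto

lemma code_inj: "inj_on code {x \<in> Wset n m r. isGNE n m a k R p x}"
proof (rule inj_onI)
  fix x y assume x: "x \<in> {x \<in> Wset n m r. isGNE n m a k R p x}" and y: "y \<in> {x \<in> Wset n m r. isGNE n m a k R p x}"
    and c: "code x = code y"
  have gx: "isGNE n m a k R p x" "x \<in> Wset n m r" using x by auto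
  have gy: "isGNE n m a k R p y" "y \<in> Wset n m r" using y by auto
  show "x = y"
  proof (rule ext, rule ext)
    fix i j
    show "x i j = y i j"
    proof (cases "i \<in> {1..n}")
      case False
      have "x \<in> profiles n m" "y \<in> profiles n m" using gx gy unfolding isGNE_def by auto
      then show ?thesis using False unfolding profiles_def by auto
    next
      case i: True
      show ?thesis
      proof (cases "j \<in> {1..m}")
        case False
        then show ?thesis using xout[OF gx i False] xout[OF gy i False] by simp
      next
        case j: True
        have supp: "\<forall>j\<in>{1..m}. x i j > 0 \<longleftrightarrow> y i j > 0"
        proof
          fix j assume jj: "j \<in> {1..m}"
          have "(i, j) \<in> code x \<longleftrightarrow> (i, j) \<in> code y" using c by simp
          then show "x i j > 0 \<longleftrightarrow> y i j > 0" using code_mem1[OF jj, of i x] code_mem1[OF jj, of i y] i by simp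
        qed
        have "(i, 0) \<in> code x \<longleftrightarrow> (i, 0) \<in> code y" using c by simp
        then have flag: "(\<Sum>q=1..m. x i q) = 1 \<longleftrightarrow> (\<Sum>q=1..m. y i q) = 1"
          using code_mem0[of i x] code_mem0[of i y] i by simp
        show ?thesis
        proof (rule ccontr)
          assume "x i j \<noteq> y i j"
          then consider "x i j < y i j" | "y i j < x i j" by linarith
          then show False
          proof cases
            case 1 show False by (rule uniq_lt[OF gx gy i supp flag j 1])
          next
            case 2
            have supp': "\<forall>j\<in>{1..m}. y i j > 0 \<longleftrightarrow> x i j > 0" using supp by simp
            have flag': "(\<Sum>q=1..m. y i q) = 1 \<longleftrightarrow> (\<Sum>q=1..m. x i q) = 1" using flag by simp
            show False by (rule uniq_lt[OF gy gx i supp' flag' j 2])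
          qed
        qed
      qed
    qed
  qed
qed

lemma main: "finite {x \<in> Wset n m r. isGNE n m a k R p x}
         \<and> card {x \<in> Wset n m r. isGNE n m a k R p x} \<le> 2 ^ (n * (m + 1))"
proof -
  have "code x \<subseteq> {1..n} \<times> {0..m}" for x
    unfolding code_def by auto
  then have sub: "code ` {x \<in> Wset n m r. isGNE n m a k R p x} \<subseteq> Pow ({1..n} \<times> {0..m})"
    by blast
  have fin: "finite (Pow ({1..n} \<times> {0..m}))" by simp
  have cd: "card (Pow ({1..n} \<times> {0..m})) = 2 ^ (n * (m + 1))"
    by (simp add: card_Pow card_cartesian_product)
  show ?thesis
    using inj_on_finite[OF code_inj sub fin] card_inj_on_le[OF code_inj sub fin] cd by simp
qed

end

lemma t1:
  assumes F_deriv: "\<forall>i\<in>{1..n}. \<forall>j\<in>{1..m::nat}. \<exists>F' F''. \<forall>t\<in>{0<..<1}.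
        (Ffun a k R p i j has_real_derivative F' t) (at t) \<and>
        (F' has_real_derivative F'' t) (at t) \<and> F' t < 0 \<and> F'' t < (0::real)"
  and i: "i \<in> {1..n}" and j: "j \<in> {1..m}"
  shows "\<exists>F'. \<forall>t\<in>{0<..<1}. (Ffun a k R p i j has_real_derivative F' t) (at t) \<and> F' t < 0"
proof -
  from bspec[OF bspec[OF F_deriv i] j] obtain F' F'' where
    H: "\<forall>t\<in>{0<..<1}. (Ffun a k R p i j has_real_derivative F' t) (at t) \<and>
        (F' has_real_derivative F'' t) (at t) \<and> F' t < 0 \<and> F'' t < (0::real)"
    by (elim exE)
  have "\<forall>t\<in>{0<..<1}. (Ffun a k R p i j has_real_derivative F' t) (at t) \<and> F' t < 0"
  proof
    fix t assume "t \<in> {0<..<(1::real)}"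
    from bspec[OF H this] show "(Ffun a k R p i j has_real_derivative F' t) (at t) \<and> F' t < 0"
      by (elim conjE) (intro conjI)
  qed
  then show ?thesis by (rule exI[of _ F'])
qed

theorem theorem10:
  fixes n m :: nat
    and R p :: "nat \<Rightarrow> real \<Rightarrow> real"
    and a k r :: "nat \<Rightarrow> real"
  assumes "n \<ge> 1" and "m \<ge> 1"
    and R_gt: "\<forall>j\<in>{1..m}. \<forall>t\<ge>0. R j t > 1"
    and p_range: "\<forall>j\<in>{1..m}. \<forall>t\<ge>0. 0 \<le> p j t \<and> p j t \<le> 1"
    and p0: "\<forall>j\<in>{1..m}. p j 0 = 0"
    and p1: "\<forall>j\<in>{1..m}. \<forall>t\<ge>1. p j t = 1"
    and a_range: "\<forall>i\<in>{1..n}. 0 < a i \<and> a i \<le> 1"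
    and k_pos: "\<forall>i\<in>{1..n}. k i > 0"
    and F_cont: "\<forall>i\<in>{1..n}. \<forall>j\<in>{1..m}. continuous_on {0..1} (Ffun a k R p i j)"
    and F_deriv: "\<forall>i\<in>{1..n}. \<forall>j\<in>{1..m}. \<exists>F' F''. \<forall>t\<in>{0<..<1}.
        (Ffun a k R p i j has_real_derivative F' t) (at t) \<and>
        (F' has_real_derivative F'' t) (at t) \<and> F' t < 0 \<and> F'' t < 0"
    and r_range: "\<forall>j\<in>{1..m}. 0 \<le> r j \<and> r j \<le> 1"
  shows "finite {x \<in> Wset n m r. isGNE n m a k R p x}
         \<and> card {x \<in> Wset n m r. isGNE n m a k R p x} \<le> 2 ^ (n * (m + 1))"
proof -
  define P where "P i j F' \<longleftrightarrow> (\<forall>t\<in>{0<..<1}.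
        (Ffun a k R p i j has_real_derivative F' t) (at t) \<and> F' t < 0)" for i j and F' :: "real \<Rightarrow> real"
  define DF where "DF i j = (SOME F'. P i j F')" for i j
  have DFp: "\<forall>i\<in>{1..n}. \<forall>j\<in>{1..m}. \<forall>t\<in>{0<..<1}.
        (Ffun a k R p i j has_real_derivative DF i j t) (at t) \<and> DF i j t < 0"
  proof (rule ballI, rule ballI)
    fix i j assume i: "i \<in> {1..n}" and j: "j \<in> {1..m}"
    have "\<exists>F'. P i j F'" unfolding P_def by (rule t1[OF F_deriv i j])
    then have "P i j (DF i j)" unfolding DF_def by (rule someI_ex)
    then show "\<forall>t\<in>{0<..<1}. (Ffun a k R p i j has_real_derivative DF i j t) (at t) \<and> DF i j t < 0"
      unfolding P_def .
  qed
  have c: "cpr n m R p a k DF"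
    by (rule cpr.intro) (fact R_gt p0 p1 a_range k_pos F_cont DFp)+
  show ?thesis using cpr.main[OF c, of r] .
qed

end
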